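(* There is a classical winning strategy for the matching game with parameter $m=4$, and there is also a classical winning strategy for the matching game with parameter $m=6$.
   Context: A perfect matching on $\{0,\ldots,m-1\}$ ($m$ even) is a partition of this set into $m/2$ sets of cardinality 2; $M_m$ denotes the set of all perfect matchings on $\{0,\ldots,m-1\}$. Let $L=\lceil\log_2 m\rceil$. For $n\in\{0,\ldots,m-1\}$, $\bar n\in\{0,1\}^L$ denotes the binary representation of $n$ written with exactly $L$ bits, most significant bit first (padded with leading zeros). On bit strings, $\oplus$ is applied bitwise, and for $u,v\in\{0,1\}^L$, $u\cdot v=\bigoplus_{i}(u_i\wedge v_i)$. The matching game with parameter $m$: Alice receives $x=x_0\cdots x_{m-1}\in\{0,1\}^m$ and outputs $a\in\{0,1\}^L$; Bob receives $y\in M_m$ and outputs a two-element set $\{b_1,b_2\}\subseteq\{0,\ldots,m-1\}$ together with a string $b\in\{0,1\}^L$. They win on question $(x,y)$ iff $\{b_1,b_2\}\in y$ and $x_{b_1}\oplus x_{b_2}=(\bar b_1\oplus\bar b_2)\cdot(a\oplus b)$; every pair $(x,y)\in\{0,1\}^m\times M_m$ is a possible question. The players cannot communicate and share no entanglement. A classical deterministic strategy is a pair of functions $s_A$ (from Alice's inputs to her outputs) and $s_B$ (from Bob's inputs to his outputs); a classical (randomized) strategy is a probability distribution over classical deterministic strategies (shared randomness). A strategy is winning if it wins with certainty on every question. *)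

theory Defs
  imports "HOL-Probability.Probability_Mass_Function"
begin

definition perfect_matching :: "nat \<Rightarrow> nat set set \<Rightarrow> bool" where
  "perfect_matching m y \<longleftrightarrow>
     (\<forall>e\<in>y. e \<subseteq> {..<m} \<and> card e = 2) \<and> \<Union>y = {..<m} \<and>
     (\<forall>e\<in>y. \<forall>f\<in>y. e \<noteq> f \<longrightarrow> e \<inter> f = {})"

definition nbits :: "nat \<Rightarrow> nat" where
  "nbits m = nat \<lceil>log 2 (real m)\<rceil>"

text \<open>Binary representation with exactly L bits, most significant bit first.\<close>
definition bin :: "nat \<Rightarrow> nat \<Rightarrow> bool list" where
  "bin L n = map (\<lambda>i. bit n (L - 1 - i)) [0..<L]"

definition bxor :: "bool list \<Rightarrow> bool list \<Rightarrow> bool list" where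
  "bxor u v = map2 (\<noteq>) u v"

definition bdot :: "bool list \<Rightarrow> bool list \<Rightarrow> bool" where
  "bdot u v = foldr (\<noteq>) (map2 (\<and>) u v) False"

text \<open>Deterministic strategy: Alice maps x (a bool list of length m) to a;
  Bob maps a matching y to (b1, b2, b), where {b1,b2} is his chosen pair.\<close>
type_synonym det_strategy =
  "(bool list \<Rightarrow> bool list) \<times> (nat set set \<Rightarrow> nat \<times> nat \<times> bool list)"

definition wins :: "nat \<Rightarrow> det_strategy \<Rightarrow> bool list \<Rightarrow> nat set set \<Rightarrow> bool" where
  "wins m s x y \<longleftrightarrow>
     (let L = nbits m; a = fst s x; (b1, b2, b) = snd s y in
       length a = L \<and> length b = L \<and> {b1, b2} \<in> y \<and>
       (x ! b1 \<noteq> x ! b2) = bdot (bxor (bin L b1) (bin L b2)) (bxor a b))"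

text \<open>A classical (randomized) strategy is a distribution over deterministic
  strategies; it is winning if it wins with certainty on every question.\<close>
definition classical_winning :: "nat \<Rightarrow> det_strategy pmf \<Rightarrow> bool" where
  "classical_winning m p \<longleftrightarrow>
     (\<forall>x y. length x = m \<and> perfect_matching m y \<longrightarrow>
        measure_pmf.prob p {s. wins m s x y} = 1)"

end

theory Submission
  imports Defs
begin

lemma pm_partner:
  assumes "perfect_matching m y"
  shows "\<exists>p. \<forall>u<m. {u, p u} \<in> y \<and> p u < m \<and> p u \<noteq> u \<and> p (p u) = u"
proof -
  have E: "\<forall>e\<in>y. e \<subseteq> {..<m} \<and> card e = 2" and U: "\<Union>y = {..<m}"
   and D: "\<forall>e\<in>y. \<forall>f\<in>y. e \<noteq> f \<longrightarrow> e \<inter> f = {}"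
    using assms unfolding perfect_matching_def by blast+
  have ex: "\<exists>v. {u,v} \<in> y \<and> v \<noteq> u" if "u < m" for u
  proof -
    have "u \<in> \<Union>y" using that U by simp
    then obtain e where e: "e \<in> y" "u \<in> e" by blast
    then have "card e = 2" using E by blast
    then obtain a b where ab: "e = {a,b}" "a \<noteq> b" by (meson card_2_iff)
    show ?thesis
    proof (cases "u = a")
      case True then show ?thesis using e ab by blast
    next
      case False then have "u = b" using e ab by blast
      then have "{u,a} = e" "a \<noteq> u" using ab by blast+
      then show ?thesis using e by blast
    qed
  qed
  have uniq: "v = w" if "{u,v} \<in> y" "{u,w} \<in> y" "v \<noteq> u" "w \<noteq> u" for u v w
  proof (rule ccontr)
    assume "v \<noteq> w"
    then have "{u,v} \<noteq> {u,w}" using that(3,4) by (simp add: doubleton_eq_iff)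
    then have "{u,v} \<inter> {u,w} = {}" by (rule D[rule_format, OF that(1) that(2)])
    then show False by simp
  qed
  define p where "p u = (SOME v. {u,v} \<in> y \<and> v \<noteq> u)" for u
  have P: "{u, p u} \<in> y \<and> p u \<noteq> u" if "u < m" for u
    unfolding p_def by (rule someI_ex[OF ex[OF that]])
  show ?thesis
  proof (rule exI[of _ p], intro allI impI conjI)
    fix u assume u: "u < m"
    show "{u, p u} \<in> y" "p u \<noteq> u" using P[OF u] by simp_all
    have "{u, p u} \<subseteq> {..<m}" using bspec[OF E conjunct1[OF P[OF u]]] by (rule conjunct1)
    then show pl: "p u < m" by simp
    have "{p u, u} = {u, p u}" by (rule insert_commute)
    then have "{p u, u} \<in> y" using P[OF u] by simp
    moreover have "{p u, p (p u)} \<in> y" "p (p u) \<noteq> p u" using P[OF pl] by simp_all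
    ultimately show "p (p u) = u" using uniq[of "p u" "p (p u)" u] P[OF u] by simp
  qed
qed

lemma nbits4: "nbits 4 = 2"
proof -
  have a: "1 < log 2 (real 4)"
    by (subst less_log_iff) auto
  have b: "log 2 (real 4) \<le> 2"
    by (subst log_le_iff) auto
  have "\<lceil>log 2 (real 4)\<rceil> = 2"
    by (rule ceiling_unique) (use a b in auto)
  then show ?thesis unfolding nbits_def by simp
qed

lemma nbits6: "nbits 6 = 3"
proof -
  have a: "2 < log 2 (real 6)"
    by (subst less_log_iff) auto
  have b: "log 2 (real 6) \<le> 3"
    by (subst log_le_iff) auto
  have "\<lceil>log 2 (real 6)\<rceil> = 3"
    by (rule ceiling_unique) (use a b in auto)
  then show ?thesis unfolding nbits_def by simp
qed

definition G4 :: "(nat \<times> nat) list" where "G4 = [(0,1),(0,2),(1,2)]"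
definition G6 :: "(nat \<times> nat) list" where
  "G6 = [(0,1),(0,2),(0,4),(1,2),(1,4),(2,4)]"

definition bob :: "(nat \<times> nat) list \<Rightarrow> bool list \<Rightarrow> nat set set \<Rightarrow> nat \<times> nat \<times> bool list" where
  "bob G b0 y = (case find (\<lambda>(i,j). {i,j} \<in> y) G of Some (i,j) \<Rightarrow> (i,j,b0) | None \<Rightarrow> (0,0,b0))"

definition S4 :: det_strategy where
  "S4 = ((\<lambda>x. [x!0 \<noteq> x!2, x!0 \<noteq> x!1]), bob G4 [False,False])"
definition S6 :: det_strategy where
  "S6 = ((\<lambda>x. [x!0 \<noteq> x!4, x!0 \<noteq> x!2, x!0 \<noteq> x!1]), bob G6 [False,False,False])"

lemma bob_pick:
  assumes "\<exists>e\<in>set G. case e of (i,j) \<Rightarrow> {i,j} \<in> y"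
  shows "\<exists>i j. (i,j) \<in> set G \<and> {i,j} \<in> y \<and> bob G b0 y = (i,j,b0)"
proof -
  from assms obtain e where "find (\<lambda>(i,j). {i,j} \<in> y) G = Some e"
    by (metis (no_types, lifting) find_None_iff2 not_None_eq)
  then show ?thesis
  proof (cases e)
    case (Pair i j)
    assume f: "find (\<lambda>(i,j). {i,j} \<in> y) G = Some e"
    then have "(i,j) \<in> set G \<and> {i,j} \<in> y" using Pair by (auto simp: find_Some_iff) (metis nth_mem)
    moreover have "bob G b0 y = (i,j,b0)" using f Pair by (simp add: bob_def)
    ultimately show ?thesis by blast
  qed
qed

lemma pick: "{a,b} \<in> y \<Longrightarrow> (a,b) \<in> set G \<Longrightarrow> \<exists>e\<in>set G. case e of (i,j) \<Rightarrow> {i,j} \<in> y"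
  by (rule bexI[of _ "(a,b)"]) simp_all

lemma hit4:
  assumes "perfect_matching 4 y"
  shows "\<exists>e\<in>set G4. case e of (i,j) \<Rightarrow> {i,j} \<in> y"
proof -
  obtain p where p: "\<forall>u<4. {u, p u} \<in> y \<and> p u < 4 \<and> p u \<noteq> u \<and> p (p u) = u"
    using pm_partner[OF assms] by blast
  have p0: "{0, p 0} \<in> y" "p 0 < 4" "p 0 \<noteq> 0" "p (p 0) = 0" using spec[OF p, of 0] by simp_all
  have p1: "{1, p 1} \<in> y" "p 1 < 4" "p 1 \<noteq> 1" "p (p 1) = 1" using spec[OF p, of 1] by simp_all
  have p2: "{2, p 2} \<in> y" "p 2 < 4" "p 2 \<noteq> 2" "p (p 2) = 2" using spec[OF p, of 2] by simp_all
  have "p 0 \<in> {1,2} \<or> p 1 \<in> {0,2}"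
  proof (rule ccontr)
    assume ne: "\<not> ?thesis"
    have "p 0 = 3" using p0(2,3) ne by (simp only: insert_iff empty_iff de_Morgan_disj) (elim conjE; arith)
    moreover have "p 1 = 3" using p1(2,3) ne by (simp only: insert_iff empty_iff de_Morgan_disj) (elim conjE; arith)
    moreover have "p 0 \<noteq> p 1" using p0(4) p1(4) by (metis zero_neq_one)
    ultimately show False by simp
  qed
  then consider "p 0 = 1" | "p 0 = 2" | "p 1 = 0" | "p 1 = 2" by (simp only: insert_iff empty_iff disj_imp) blast
  then show ?thesis
  proof cases
    case 1
    then have "{0,1} \<in> y" using p0(1) by (metis insert_commute)
    moreover have "(0,1) \<in> set G4" by (simp add: G4_def)
    ultimately show ?thesis by (rule pick)
  next
    case 2
    then have "{0,2} \<in> y" using p0(1) by (metis insert_commute)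
    moreover have "(0,2) \<in> set G4" by (simp add: G4_def)
    ultimately show ?thesis by (rule pick)
  next
    case 3
    then have "{0,1} \<in> y" using p1(1) by (metis insert_commute)
    moreover have "(0,1) \<in> set G4" by (simp add: G4_def)
    ultimately show ?thesis by (rule pick)
  next
    case 4
    then have "{1,2} \<in> y" using p1(1) by (metis insert_commute)
    moreover have "(1,2) \<in> set G4" by (simp add: G4_def)
    ultimately show ?thesis by (rule pick)
  qed
qed

lemma hit6:
  assumes "perfect_matching 6 y"
  shows "\<exists>e\<in>set G6. case e of (i,j) \<Rightarrow> {i,j} \<in> y"
proof -
  obtain p where p: "\<forall>u<6. {u, p u} \<in> y \<and> p u < 6 \<and> p u \<noteq> u \<and> p (p u) = u"
    using pm_partner[OF assms] by blast
  have p0: "{0, p 0} \<in> y" "p 0 < 6" "p 0 \<noteq> 0" "p (p 0) = 0" using spec[OF p, of 0] by simp_all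
  have p1: "{1, p 1} \<in> y" "p 1 < 6" "p 1 \<noteq> 1" "p (p 1) = 1" using spec[OF p, of 1] by simp_all
  have p2: "{2, p 2} \<in> y" "p 2 < 6" "p 2 \<noteq> 2" "p (p 2) = 2" using spec[OF p, of 2] by simp_all
  have "p 0 \<in> {1,2,4} \<or> p 1 \<in> {0,2,4} \<or> p 2 \<in> {0,1,4}"
  proof (rule ccontr)
    assume ne: "\<not> ?thesis"
    have "p 0 = 3 \<or> p 0 = 5" using p0(2,3) ne by (simp only: insert_iff empty_iff de_Morgan_disj) (elim conjE; arith)
    moreover have "p 1 = 3 \<or> p 1 = 5" using p1(2,3) ne by (simp only: insert_iff empty_iff de_Morgan_disj) (elim conjE; arith)
    moreover have "p 2 = 3 \<or> p 2 = 5" using p2(2,3) ne by (simp only: insert_iff empty_iff de_Morgan_disj) (elim conjE; arith)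
    moreover have "p 0 \<noteq> p 1" using p0(4) p1(4) by (metis zero_neq_one)
    moreover have "p 0 \<noteq> p 2" using p0(4) p2(4) by (metis zero_neq_numeral)
    moreover have "p 1 \<noteq> p 2" using p1(4) p2(4) by (metis Suc_1 n_not_Suc_n)
    ultimately show False by linarith
  qed
  then consider "p 0 = 1" | "p 0 = 2" | "p 0 = 4" | "p 1 = 0" | "p 1 = 2" | "p 1 = 4" | "p 2 = 0" | "p 2 = 1" | "p 2 = 4" by (simp only: insert_iff empty_iff disj_imp) blast
  then show ?thesis
  proof cases
    case 1
    then have "{0,1} \<in> y" using p0(1) by (metis insert_commute)
    moreover have "(0,1) \<in> set G6" by (simp add: G6_def)
    ultimately show ?thesis by (rule pick)
  next
    case 2
    then have "{0,2} \<in> y" using p0(1) by (metis insert_commute)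
    moreover have "(0,2) \<in> set G6" by (simp add: G6_def)
    ultimately show ?thesis by (rule pick)
  next
    case 3
    then have "{0,4} \<in> y" using p0(1) by (metis insert_commute)
    moreover have "(0,4) \<in> set G6" by (simp add: G6_def)
    ultimately show ?thesis by (rule pick)
  next
    case 4
    then have "{0,1} \<in> y" using p1(1) by (metis insert_commute)
    moreover have "(0,1) \<in> set G6" by (simp add: G6_def)
    ultimately show ?thesis by (rule pick)
  next
    case 5
    then have "{1,2} \<in> y" using p1(1) by (metis insert_commute)
    moreover have "(1,2) \<in> set G6" by (simp add: G6_def)
    ultimately show ?thesis by (rule pick)
  next
    case 6
    then have "{1,4} \<in> y" using p1(1) by (metis insert_commute)
    moreover have "(1,4) \<in> set G6" by (simp add: G6_def)
    ultimately show ?thesis by (rule pick)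
  next
    case 7
    then have "{0,2} \<in> y" using p2(1) by (metis insert_commute)
    moreover have "(0,2) \<in> set G6" by (simp add: G6_def)
    ultimately show ?thesis by (rule pick)
  next
    case 8
    then have "{1,2} \<in> y" using p2(1) by (metis insert_commute)
    moreover have "(1,2) \<in> set G6" by (simp add: G6_def)
    ultimately show ?thesis by (rule pick)
  next
    case 9
    then have "{2,4} \<in> y" using p2(1) by (metis insert_commute)
    moreover have "(2,4) \<in> set G6" by (simp add: G6_def)
    ultimately show ?thesis by (rule pick)
  qed
qed

lemma win4: "length x = 4 \<Longrightarrow> perfect_matching 4 y \<Longrightarrow> wins 4 S4 x y"
proof -
  assume "perfect_matching 4 y"
  from bob_pick[OF hit4[OF this], of "[False,False]"] obtain i j where
    ij: "(i,j) \<in> set G4" "{i,j} \<in> y" "bob G4 [False,False] y = (i,j,[False,False])" by blast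
  from ij(1) have eq: "(x!i \<noteq> x!j) = bdot (bxor (bin 2 i) (bin 2 j)) (bxor [x!0 \<noteq> x!2, x!0 \<noteq> x!1] [False,False])"
    unfolding G4_def by (auto simp: bdot_def bxor_def bin_def upt_rec bit_iff_odd)
  show ?thesis unfolding wins_def Let_def S4_def nbits4
    by (simp only: fst_conv snd_conv ij(3) prod.case) (intro conjI, simp, simp, rule ij(2), rule eq)
qed

lemma win6: "length x = 6 \<Longrightarrow> perfect_matching 6 y \<Longrightarrow> wins 6 S6 x y"
proof -
  assume "perfect_matching 6 y"
  from bob_pick[OF hit6[OF this], of "[False,False,False]"] obtain i j where
    ij: "(i,j) \<in> set G6" "{i,j} \<in> y" "bob G6 [False,False,False] y = (i,j,[False,False,False])" by blast
  from ij(1) have eq: "(x!i \<noteq> x!j) = bdot (bxor (bin 3 i) (bin 3 j)) (bxor [x!0 \<noteq> x!4, x!0 \<noteq> x!2, x!0 \<noteq> x!1] [False,False,False])"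
    unfolding G6_def by (auto simp: bdot_def bxor_def bin_def upt_rec bit_iff_odd)
  show ?thesis unfolding wins_def Let_def S6_def nbits6
    by (simp only: fst_conv snd_conv ij(3) prod.case) (intro conjI, simp, simp, rule ij(2), rule eq)
qed

theorem theorem1:
  shows "(\<exists>p. classical_winning 4 p) \<and> (\<exists>p. classical_winning 6 p)"
proof
  show "\<exists>p. classical_winning 4 p"
    by (rule exI[of _ "return_pmf S4"]) (auto simp: classical_winning_def win4)
  show "\<exists>p. classical_winning 6 p"
    by (rule exI[of _ "return_pmf S6"]) (auto simp: classical_winning_def win6)
qed

end
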